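(* Let $n\ge 1$ and let $Q$ be a quiver (with arbitrary orientation of its arrows) whose underlying graph is a Dynkin graph of type $A_r$, $D_r$, $E_6$, $E_7$ or $E_8$, so that $Q$ has $r$ vertices and $r-1$ arrows. Let $\beta=(n,\dots,n)$. Then the ring of $\mathbb{U}_\beta$-invariant polynomial functions on $F^{\bullet}Rep(Q,\beta)\cong\mathfrak{b}_n^{\oplus (r-1)}$ is $$\mathbb{C}[F^{\bullet}Rep(Q,\beta)]^{\mathbb{U}_\beta}=\mathbb{C}[\mathfrak{t}_n^{\oplus (r-1)}],$$ i.e. it is the subalgebra generated by the diagonal entries $(A_a)_{kk}$, $1\le k\le n$, $a\in Q_1$ (a polynomial ring in $n(r-1)$ variables).
   Context: For a quiver $Q=(Q_0,Q_1)$ with head and tail maps $h,t:Q_1\to Q_0$ and dimension vector $\beta=(n,\dots,n)$, put the vector space $\mathbb{C}^n$ at each vertex with the complete standard flag $0\subset\mathbb{C}^1\subset\cdots\subset\mathbb{C}^n$ ($\mathbb{C}^k$ spanned by the first $k$ standard basis vectors). The filtered quiver variety $F^{\bullet}Rep(Q,\beta)$ is the space of tuples $(A_a)_{a\in Q_1}$ of $n\times n$ matrices with $A_a(\mathbb{C}^k)\subseteq\mathbb{C}^k$ for all $k$, i.e. $F^{\bullet}Rep(Q,\beta)=\mathfrak{b}_n^{\oplus Q_1}$ where $\mathfrak{b}_n$ is the space of upper triangular $n\times n$ complex matrices. Let $U\subset GL_n(\mathbb{C})$ be the group of upper triangular unipotent matrices and $\mathbb{U}_\beta=U^{Q_0}$,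 acting by $(u_i)_{i\in Q_0}\cdot(A_a)_{a}=(u_{h(a)}A_au_{t(a)}^{-1})_a$; it acts on polynomial functions by $(u\cdot f)(A)=f(u^{-1}\cdot A)$. $\mathfrak{t}_n$ denotes the diagonal $n\times n$ matrices, and $\mathbb{C}[\mathfrak{t}_n^{\oplus Q_1}]$ denotes the subalgebra of $\mathbb{C}[\mathfrak{b}_n^{\oplus Q_1}]$ generated by the diagonal entries of the $A_a$. *)

theory Defs
  imports Complex_Main
begin

datatype dynkin_type = Dyn_A nat | Dyn_D nat | Dyn_E nat

fun dynkin_valid :: "dynkin_type \<Rightarrow> bool" where
  "dynkin_valid (Dyn_A r) = (r \<ge> 1)"
| "dynkin_valid (Dyn_D r) = (r \<ge> 4)"
| "dynkin_valid (Dyn_E r) = (r \<in> {6, 7, 8})"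

fun dynkin_rank :: "dynkin_type \<Rightarrow> nat" where
  "dynkin_rank (Dyn_A r) = r"
| "dynkin_rank (Dyn_D r) = r"
| "dynkin_rank (Dyn_E r) = r"

fun dynkin_edges :: "dynkin_type \<Rightarrow> nat set set" where
  "dynkin_edges (Dyn_A r) = {{i, i + 1} | i. i + 1 < r}"
| "dynkin_edges (Dyn_D r) = {{i, i + 1} | i. i + 2 < r} \<union> {{r - 3, r - 1}}"
| "dynkin_edges (Dyn_E r) = {{i, i + 1} | i. i + 2 < r} \<union> {{2, r - 1}}"

text \<open>A quiver (Q0, Q1, h, t) whose underlying graph is the Dynkin graph of type T:
  heads/tails of arrows are vertices, and there is a bijection of the vertices with
  {0..<r} inducing a bijection of the arrows with the edges of the standard Dynkin graph
  (so no loops, no multiple edges, arbitrary orientation).\<close>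
definition dynkin_quiver ::
  "dynkin_type \<Rightarrow> 'v set \<Rightarrow> 'e set \<Rightarrow> ('e \<Rightarrow> 'v) \<Rightarrow> ('e \<Rightarrow> 'v) \<Rightarrow> bool" where
  "dynkin_quiver T Q0 Q1 h t \<longleftrightarrow>
     dynkin_valid T \<and> h ` Q1 \<subseteq> Q0 \<and> t ` Q1 \<subseteq> Q0 \<and>
     (\<exists>\<phi>. bij_betw \<phi> Q0 {..<dynkin_rank T} \<and>
          bij_betw (\<lambda>a. {\<phi> (t a), \<phi> (h a)}) Q1 (dynkin_edges T))"

section \<open>Matrices (n x n, indices 0..<n, entries outside are 0)\<close>

type_synonym cmat = "nat \<Rightarrow> nat \<Rightarrow> complex"

definition mat_mult :: "nat \<Rightarrow> cmat \<Rightarrow> cmat \<Rightarrow> cmat" where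
  "mat_mult n X Y = (\<lambda>i j. if i < n \<and> j < n then (\<Sum>k<n. X i k * Y k j) else 0)"

definition mat_id :: "nat \<Rightarrow> cmat" where
  "mat_id n = (\<lambda>i j. if i < n \<and> j < n \<and> i = j then 1 else 0)"

definition unipotent :: "nat \<Rightarrow> cmat set" where
  "unipotent n = {u. (\<forall>i j. (n \<le> i \<or> n \<le> j \<or> j < i) \<longrightarrow> u i j = 0) \<and> (\<forall>i<n. u i i = 1)}"

text \<open>F Rep(Q,beta) = b_n^{Q1}: tuples of upper triangular n x n matrices indexed by arrows
  (entries outside the range and at non-arrows are 0).\<close>
definition filtered_rep :: "'e set \<Rightarrow> nat \<Rightarrow> ('e \<Rightarrow> cmat) set" where
  "filtered_rep Q1 n = {A. \<forall>a i j. A a i j \<noteq> 0 \<longrightarrow> a \<in> Q1 \<and> i \<le> j \<and> j < n}"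

definition upper_coords :: "'e set \<Rightarrow> nat \<Rightarrow> ('e \<times> nat \<times> nat) set" where
  "upper_coords Q1 n = {(a, i, j). a \<in> Q1 \<and> i \<le> j \<and> j < n}"

definition diag_coords :: "'e set \<Rightarrow> nat \<Rightarrow> ('e \<times> nat \<times> nat) set" where
  "diag_coords Q1 n = {(a, k, k) | a k. a \<in> Q1 \<and> k < n}"

inductive_set poly_fun :: "('e \<times> nat \<times> nat) set \<Rightarrow> (('e \<Rightarrow> cmat) \<Rightarrow> complex) set"
  for C :: "('e \<times> nat \<times> nat) set" where
  const: "(\<lambda>_. c) \<in> poly_fun C"
| coord: "(a, i, j) \<in> C \<Longrightarrow> (\<lambda>A. A a i j) \<in> poly_fun C"
| add: "f \<in> poly_fun C \<Longrightarrow> g \<in> poly_fun C \<Longrightarrow> (\<lambda>A. f A + g A) \<in> poly_fun C"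
| mult: "f \<in> poly_fun C \<Longrightarrow> g \<in> poly_fun C \<Longrightarrow> (\<lambda>A. f A * g A) \<in> poly_fun C"

text \<open>(u_i) . (A_a) = (u_{h a} A_a u_{t a}^{-1}); here v i is the inverse of u i.\<close>
definition quiver_act ::
  "nat \<Rightarrow> ('e \<Rightarrow> 'v) \<Rightarrow> ('e \<Rightarrow> 'v) \<Rightarrow> ('v \<Rightarrow> cmat) \<Rightarrow> ('v \<Rightarrow> cmat) \<Rightarrow> ('e \<Rightarrow> cmat) \<Rightarrow> ('e \<Rightarrow> cmat)" where
  "quiver_act n h t u v A = (\<lambda>a. mat_mult n (mat_mult n (u (h a)) (A a)) (v (t a)))"

text \<open>f is U_beta-invariant as a function on F Rep(Q,beta).  (Invariance under all u is
  the same as invariance under all u^{-1}, so the convention (u.f)(A)=f(u^{-1}.A) is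
  immaterial.)\<close>
definition U_invariant ::
  "'v set \<Rightarrow> 'e set \<Rightarrow> ('e \<Rightarrow> 'v) \<Rightarrow> ('e \<Rightarrow> 'v) \<Rightarrow> nat \<Rightarrow> (('e \<Rightarrow> cmat) \<Rightarrow> complex) \<Rightarrow> bool" where
  "U_invariant Q0 Q1 h t n f \<longleftrightarrow>
     (\<forall>u v. (\<forall>i\<in>Q0. u i \<in> unipotent n \<and> v i \<in> unipotent n \<and> mat_mult n (u i) (v i) = mat_id n)
        \<longrightarrow> (\<forall>A\<in>filtered_rep Q1 n. f (quiver_act n h t u v A) = f A))"

end

theory Submission imports Defs "HOL-Analysis.Analysis" begin

definition ut :: "nat \<Rightarrow> cmat set" where
  "ut n = {M. \<forall>i j. M i j \<noteq> 0 \<longrightarrow> i \<le> j \<and> j < n}"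

lemma unip_ut: "U \<in> unipotent n \<Longrightarrow> U \<in> ut n"
proof -
  assume "U \<in> unipotent n"
  then have z: "\<And>i j. n \<le> i \<or> n \<le> j \<or> j < i \<Longrightarrow> U i j = 0" unfolding unipotent_def by blast
  show ?thesis unfolding ut_def mem_Collect_eq
  proof (intro allI impI)
    fix i j assume "U i j \<noteq> 0"
    then have "\<not> (n \<le> i \<or> n \<le> j \<or> j < i)" using z by blast
    then show "i \<le> j \<and> j < n" by simp
  qed
qed

lemma utD: "M \<in> ut n \<Longrightarrow> M i j \<noteq> 0 \<Longrightarrow> i \<le> j \<and> j < n"
  unfolding ut_def by blast

lemma ut_zero: "M \<in> ut n \<Longrightarrow> j < i \<or> n \<le> j \<Longrightarrow> M i j = 0"
  unfolding ut_def by force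

lemma sum_id_left: "i < n \<Longrightarrow> (\<Sum>k<n. mat_id n i k * X k) = X i"
proof -
  assume i: "i < n"
  have "(\<Sum>k<n. mat_id n i k * X k) = (\<Sum>k<n. if k = i then X k else 0)"
    by (rule sum.cong) (auto simp: mat_id_def i)
  also have "\<dots> = X i" using i by (simp add: sum.delta')
  finally show ?thesis .
qed

lemma sum_id_right: "j < n \<Longrightarrow> (\<Sum>k<n. X k * mat_id n k j) = X j"
proof -
  assume j: "j < n"
  have "(\<Sum>k<n. X k * mat_id n k j) = (\<Sum>k<n. if k = j then X k else 0)"
    by (rule sum.cong) (auto simp: mat_id_def j)
  also have "\<dots> = X j" using j by (simp add: sum.delta')
  finally show ?thesis .
qed

lemma mm_id_left: "M \<in> ut n \<Longrightarrow> mat_mult n (mat_id n) M = M"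
  by (rule ext)+ (auto simp: mat_mult_def sum_id_left intro: ut_zero[symmetric] dest: utD)

lemma mm_id_right: "M \<in> ut n \<Longrightarrow> mat_mult n M (mat_id n) = M"
proof (rule ext, rule ext)
  fix i j assume M: "M \<in> ut n"
  show "mat_mult n M (mat_id n) i j = M i j"
  proof (cases "i < n \<and> j < n")
    case True then show ?thesis by (simp add: mat_mult_def sum_id_right)
  next
    case False
    have "M i j = 0"
    proof (rule ccontr)
      assume "M i j \<noteq> 0" then have "i \<le> j" "j < n" using utD[OF M] by blast+
      then show False using False by simp
    qed
    then show ?thesis using False by (auto simp: mat_mult_def)
  qed
qed

lemma mm_ut: assumes "X \<in> ut n" "Y \<in> ut n" shows "mat_mult n X Y \<in> ut n"
  unfolding ut_def mem_Collect_eq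
proof (intro allI impI)
  fix i j assume ne: "mat_mult n X Y i j \<noteq> 0"
  then have ij: "i < n" "j < n" by (auto simp: mat_mult_def split: if_splits)
  have "i \<le> j"
  proof (rule ccontr)
    assume "\<not> i \<le> j"
    have "\<forall>k. X i k * Y k j = 0"
    proof
      fix k show "X i k * Y k j = 0"
      proof (rule ccontr)
        assume "X i k * Y k j \<noteq> 0"
        then have "X i k \<noteq> 0" "Y k j \<noteq> 0" by auto
        then have "i \<le> k" "k \<le> j" using utD[OF assms(1)] utD[OF assms(2)] by blast+
        then show False using \<open>\<not> i \<le> j\<close> by simp
      qed
    qed
    then have "(\<Sum>k<n. X i k * Y k j) = 0" by (simp add: sum.neutral)
    then show False using ne by (simp add: mat_mult_def split: if_splits)
  qed
  then show "i \<le> j \<and> j < n" using ij by simp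
qed

lemma mm_diag: assumes "X \<in> ut n" "Y \<in> ut n" "k < n"
  shows "mat_mult n X Y k k = X k k * Y k k"
proof -
  have "(\<Sum>m<n. X k m * Y m k) = (\<Sum>m<n. if m = k then X k m * Y m k else 0)"
  proof (rule sum.cong)
    fix m assume "m \<in> {..<n}"
    show "X k m * Y m k = (if m = k then X k m * Y m k else 0)"
    proof (cases "m = k")
      case False
      show ?thesis
      proof (rule ccontr)
        assume "X k m * Y m k \<noteq> (if m = k then X k m * Y m k else 0)"
        then have "X k m \<noteq> 0" "Y m k \<noteq> 0" using False by auto
        then have "k \<le> m" "m \<le> k" using utD[OF assms(1)] utD[OF assms(2)] by blast+
        then show False using False by simp
      qed
    qed simp
  qed simp
  then show ?thesis using assms(3) by (simp add: mat_mult_def sum.delta')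
qed

lemma id_unip: "mat_id n \<in> unipotent n"
  by (auto simp: mat_id_def unipotent_def)

lemma id_ut: "mat_id n \<in> ut n"
  by (rule unip_ut[OF id_unip])

lemma id_id: "mat_mult n (mat_id n) (mat_id n) = mat_id n"
  by (rule mm_id_left[OF id_ut])

definition IpN :: "nat \<Rightarrow> cmat \<Rightarrow> cmat" where
  "IpN n N = (\<lambda>i j. mat_id n i j + N i j)"

definition nil_ok :: "nat \<Rightarrow> cmat \<Rightarrow> bool" where
  "nil_ok n N \<longleftrightarrow> (\<forall>i j. N i j \<noteq> 0 \<longrightarrow> i < j \<and> j < n) \<and> (\<forall>i k j. N i k \<noteq> 0 \<longrightarrow> N k j = 0)"

lemma nil_ok_neg: "nil_ok n N \<Longrightarrow> nil_ok n (\<lambda>i j. - N i j)"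
  by (simp add: nil_ok_def)

lemma IpN_unip: "nil_ok n N \<Longrightarrow> IpN n N \<in> unipotent n"
proof -
  assume a: "nil_ok n N"
  have "\<And>i j. (n \<le> i \<or> n \<le> j \<or> j < i) \<Longrightarrow> N i j = 0"
  proof -
    fix i j assume c: "n \<le> i \<or> n \<le> j \<or> j < i"
    show "N i j = 0"
    proof (rule ccontr)
      assume "N i j \<noteq> 0" then have "i < j \<and> j < n" using a unfolding nil_ok_def by blast
      then show False using c by auto
    qed
  qed
  moreover have "\<And>i. N i i = 0" using a unfolding nil_ok_def by blast
  ultimately show ?thesis unfolding unipotent_def IpN_def mat_id_def by auto
qed

lemma IpN_left: "i < n \<Longrightarrow> j < n \<Longrightarrow>
  mat_mult n (IpN n N) M i j = M i j + (\<Sum>k<n. N i k * M k j)"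
  by (simp add: mat_mult_def IpN_def distrib_right sum.distrib sum_id_left)

lemma IpN_right: "i < n \<Longrightarrow> j < n \<Longrightarrow>
  mat_mult n M (IpN n N) i j = M i j + (\<Sum>k<n. M i k * N k j)"
  by (simp add: mat_mult_def IpN_def distrib_left sum.distrib sum_id_right)

lemma IpN_inv: assumes "nil_ok n N"
  shows "mat_mult n (IpN n N) (IpN n (\<lambda>i j. - N i j)) = mat_id n"
proof (rule ext, rule ext)
  fix i j
  show "mat_mult n (IpN n N) (IpN n (\<lambda>i j. - N i j)) i j = mat_id n i j"
  proof (cases "i < n \<and> j < n")
    case True
    have z: "(\<Sum>k<n. N i k * N k j) = 0"
    proof (intro sum.neutral ballI)
      fix k show "N i k * N k j = 0"
        using assms unfolding nil_ok_def by (cases "N i k = 0") auto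
    qed
    have "mat_mult n (IpN n N) (IpN n (\<lambda>i j. - N i j)) i j
       = IpN n (\<lambda>i j. - N i j) i j + (\<Sum>k<n. N i k * IpN n (\<lambda>i j. - N i j) k j)"
      using True by (simp add: IpN_left)
    also have "(\<Sum>k<n. N i k * IpN n (\<lambda>i j. - N i j) k j)
       = (\<Sum>k<n. N i k * mat_id n k j) - (\<Sum>k<n. N i k * N k j)"
      by (simp add: IpN_def algebra_simps sum_subtractf)
    also have "\<dots> = N i j" using True z by (simp add: sum_id_right)
    finally show ?thesis by (simp add: IpN_def)
  next
    case False then show ?thesis by (auto simp: mat_mult_def mat_id_def)
  qed
qed


lemma poly_agree: "f \<in> poly_fun C \<Longrightarrow> (\<forall>(a,i,j)\<in>C. A a i j = B a i j) \<Longrightarrow> f A = f B"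
  by (induction f rule: poly_fun.induct) auto

definition Dg :: "('e \<Rightarrow> cmat) \<Rightarrow> ('e \<Rightarrow> cmat)" where
  "Dg A = (\<lambda>a i j. if i = j then A a i j else 0)"

lemma poly_Dg: "f \<in> poly_fun (upper_coords Q1 n) \<Longrightarrow> (\<lambda>A. f (Dg A)) \<in> poly_fun (diag_coords Q1 n)"
proof (induction f rule: poly_fun.induct)
  case (const c) then show ?case by (rule poly_fun.const)
next
  case (coord a i j)
  show ?case
  proof (cases "i = j")
    case True
    then have "(a, i, j) \<in> diag_coords Q1 n" using coord by (auto simp: upper_coords_def diag_coords_def)
    then show ?thesis using True by (simp add: Dg_def poly_fun.coord)
  next
    case False
    then show ?thesis by (simp add: Dg_def poly_fun.const)
  qed
next
  case (add f g) from poly_fun.add[OF add.IH] show ?case by simp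
next
  case (mult f g) from poly_fun.mult[OF mult.IH] show ?case by simp
qed

lemma poly_cont: "f \<in> poly_fun C \<Longrightarrow>
   continuous_on UNIV (\<lambda>s::complex. f (\<lambda>a i j. A a i j + s * E a i j))"
  by (induction f rule: poly_fun.induct) (auto intro!: continuous_intros)

lemma filt_ut: "B \<in> filtered_rep Q1 n \<Longrightarrow> B a \<in> ut n"
  unfolding filtered_rep_def ut_def by blast

lemma filt_out: "B \<in> filtered_rep Q1 n \<Longrightarrow> a \<notin> Q1 \<Longrightarrow> B a = (\<lambda>i j. 0)"
  unfolding filtered_rep_def by blast

lemma mm_zero_r: "mat_mult n X (\<lambda>i j. 0) = (\<lambda>i j. 0)"
  by (rule ext)+ (simp add: mat_mult_def)
lemma mm_zero_l: "mat_mult n (\<lambda>i j. 0) X = (\<lambda>i j. 0)"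
  by (rule ext)+ (simp add: mat_mult_def)

lemma act_props:
  assumes B: "B \<in> filtered_rep Q1 n"
    and uv: "\<forall>a\<in>Q1. u (h a) \<in> unipotent n \<and> v (t a) \<in> unipotent n"
  shows "quiver_act n h t u v B \<in> filtered_rep Q1 n"
    and "Dg (quiver_act n h t u v B) = Dg B"
proof -
  let ?B' = "quiver_act n h t u v B"
  have out: "a \<notin> Q1 \<Longrightarrow> ?B' a = (\<lambda>i j. 0)" for a
    using filt_out[OF B] by (simp add: quiver_act_def mm_zero_r mm_zero_l)
  have inut: "a \<in> Q1 \<Longrightarrow> ?B' a \<in> ut n" for a
    using uv filt_ut[OF B] unip_ut by (simp add: quiver_act_def mm_ut)
  show "?B' \<in> filtered_rep Q1 n"
    unfolding filtered_rep_def mem_Collect_eq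
  proof (intro allI impI)
    fix a i j assume ne: "?B' a i j \<noteq> 0"
    then have a: "a \<in> Q1" using out by fastforce
    then show "a \<in> Q1 \<and> i \<le> j \<and> j < n" using inut[OF a] ne utD by blast
  qed
  have dg: "?B' a k k = B a k k" for a k
  proof (cases "a \<in> Q1 \<and> k < n")
    case True
    then have U: "u (h a) \<in> ut n" and V: "v (t a) \<in> ut n" and M: "B a \<in> ut n"
      and UU: "u (h a) k k = 1" and VV: "v (t a) k k = 1"
      using uv unip_ut filt_ut[OF B] by (auto simp: unipotent_def)
    have "?B' a k k = mat_mult n (u (h a)) (B a) k k * v (t a) k k"
      unfolding quiver_act_def using True by (intro mm_diag mm_ut U V M) auto
    also have "\<dots> = B a k k"
      using True by (simp add: mm_diag[OF U M] UU VV)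
    finally show ?thesis .
  next
    case False
    show ?thesis
    proof (cases "a \<in> Q1")
      case False then show ?thesis using out filt_out[OF B] by simp
    next
      case True
      then have "\<not> k < n" using \<open>\<not> (a \<in> Q1 \<and> k < n)\<close> by simp
      then show ?thesis using filt_ut[OF B, of a] by (simp add: quiver_act_def mat_mult_def ut_zero)
    qed
  qed
  show "Dg ?B' = Dg B" unfolding Dg_def by (rule ext)+ (simp add: dg)
qed


lemma one_vertex:
  assumes inv: "U_invariant Q0 Q1 h t n f" and B: "B \<in> filtered_rep Q1 n"
    and U: "U \<in> unipotent n" and V: "V \<in> unipotent n" and UV: "mat_mult n U V = mat_id n"
    and B'def: "B' = quiver_act n h t (\<lambda>i. if i = w then U else mat_id n) (\<lambda>i. if i = w then V else mat_id n) B"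
  shows "f B' = f B" "B' \<in> filtered_rep Q1 n" "Dg B' = Dg B"
   "\<And>a. h a \<noteq> w \<Longrightarrow> t a \<noteq> w \<Longrightarrow> B' a = B a"
   "\<And>a. h a = w \<Longrightarrow> t a \<noteq> w \<Longrightarrow> B' a = mat_mult n U (B a)"
   "\<And>a. t a = w \<Longrightarrow> h a \<noteq> w \<Longrightarrow> B' a = mat_mult n (B a) V"
proof -
  let ?u = "(\<lambda>i. if i = w then U else mat_id n)"
  let ?v = "(\<lambda>i. if i = w then V else mat_id n)"
  have uv: "\<forall>i. ?u i \<in> unipotent n \<and> ?v i \<in> unipotent n \<and> mat_mult n (?u i) (?v i) = mat_id n"
    using U V UV id_unip id_id by auto
  have key: "\<And>u v A. (\<forall>i\<in>Q0. u i \<in> unipotent n \<and> v i \<in> unipotent n \<and> mat_mult n (u i) (v i) = mat_id n)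
     \<Longrightarrow> A \<in> filtered_rep Q1 n \<Longrightarrow> f (quiver_act n h t u v A) = f A"
    using inv unfolding U_invariant_def by blast
  show "f B' = f B" unfolding B'def by (rule key) (use uv B in auto)
  show "B' \<in> filtered_rep Q1 n" "Dg B' = Dg B"
    using act_props[OF B, where u = ?u and v = ?v and h = h and t = t] uv unfolding B'def by auto
  show "\<And>a. h a \<noteq> w \<Longrightarrow> t a \<noteq> w \<Longrightarrow> B' a = B a"
    unfolding B'def quiver_act_def using filt_ut[OF B] by (simp add: mm_id_left mm_id_right)
  show "\<And>a. h a = w \<Longrightarrow> t a \<noteq> w \<Longrightarrow> B' a = mat_mult n U (B a)"
    unfolding B'def quiver_act_def using filt_ut[OF B] unip_ut[OF U] by (simp add: mm_id_right mm_ut)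
  show "\<And>a. t a = w \<Longrightarrow> h a \<noteq> w \<Longrightarrow> B' a = mat_mult n (B a) V"
    unfolding B'def quiver_act_def using filt_ut[OF B] by (simp add: mm_id_left)
qed

lemma sum_single: "(\<Sum>k<(n::nat). if k = m then c else (0::complex)) = (if m < n then c else 0)"
  by simp

lemma clear_head:
  assumes inv: "U_invariant Q0 Q1 h t n f" and B: "B \<in> filtered_rep Q1 n"
    and hw: "h a0 = w" and tw: "t a0 \<noteq> w" and nz: "\<forall>k<n. B a0 k k \<noteq> 0"
  shows "\<exists>B'. B' \<in> filtered_rep Q1 n \<and> Dg B' = Dg B \<and> f B' = f B \<and>
     (\<forall>a. h a \<noteq> w \<and> t a \<noteq> w \<longrightarrow> B' a = B a) \<and> (\<forall>i j. i < j \<longrightarrow> B' a0 i j = 0)"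
proof -
  have "\<exists>B'. B' \<in> filtered_rep Q1 n \<and> Dg B' = Dg B \<and> f B' = f B \<and>
     (\<forall>a. h a \<noteq> w \<and> t a \<noteq> w \<longrightarrow> B' a = B a) \<and> (\<forall>i j. i < j \<and> j < m \<longrightarrow> B' a0 i j = 0)" for m
  proof (induction m)
    case 0 then show ?case using B by auto
  next
    case (Suc m)
    then obtain B1 where B1: "B1 \<in> filtered_rep Q1 n" "Dg B1 = Dg B" "f B1 = f B"
      "\<forall>a. h a \<noteq> w \<and> t a \<noteq> w \<longrightarrow> B1 a = B a" "\<forall>i j. i < j \<and> j < m \<longrightarrow> B1 a0 i j = 0"
      by blast
    show ?case
    proof (cases "m < n")
      case False
      have "\<forall>i j. i < j \<and> j < Suc m \<longrightarrow> B1 a0 i j = 0"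
        using B1(5) False filt_ut[OF B1(1), of a0] ut_zero less_Suc_eq by fastforce
      then show ?thesis using B1 by blast
    next
      case True
      define M where "M = B1 a0"
      have Mut: "M \<in> ut n" unfolding M_def by (rule filt_ut[OF B1(1)])
      have "Dg B1 a0 m m = Dg B a0 m m" using B1(2) by simp
      then have Mmm: "M m m \<noteq> 0" using nz True unfolding M_def Dg_def by simp
      define N where "N = (\<lambda>i j. if j = m \<and> i < m then - M i m / M m m else 0)"
      have nok: "nil_ok n N" unfolding nil_ok_def N_def using True by auto
      define B2 where "B2 = quiver_act n h t (\<lambda>i. if i = w then IpN n N else mat_id n)
          (\<lambda>i. if i = w then IpN n (\<lambda>i j. - N i j) else mat_id n) B1"
      note ov = one_vertex[OF inv B1(1) IpN_unip[OF nok] IpN_unip[OF nil_ok_neg[OF nok]] IpN_inv[OF nok] B2_def]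
      have B2a0: "B2 a0 = mat_mult n (IpN n N) M" using ov(5)[OF hw tw] M_def by simp
      have "B2 a0 i j = 0" if ij: "i < j" "j < Suc m" for i j
      proof -
        have jn: "j < n" "i < n" using ij True by auto
        have s: "(\<Sum>k<n. N i k * M k j) = (\<Sum>k<n. if k = m then N i m * M m j else 0)"
          by (rule sum.cong) (auto simp: N_def)
        have "B2 a0 i j = M i j + N i m * M m j"
          using jn True by (simp add: B2a0 IpN_left s sum_single)
        also have "\<dots> = 0"
        proof (cases "j = m")
          case True
          then show ?thesis using ij Mmm by (simp add: N_def)
        next
          case False
          then have "j < m" using ij by simp
          then have "M i j = 0" "M m j = 0" using B1(5) ij ut_zero[OF Mut] unfolding M_def by auto
          then show ?thesis by simp
        qed
        finally show ?thesis .
      qed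
      then show ?thesis using ov(1-4) B1 by (intro exI[of _ B2]) auto
    qed
  qed
  then obtain B' where B': "B' \<in> filtered_rep Q1 n" "Dg B' = Dg B" "f B' = f B"
     "\<forall>a. h a \<noteq> w \<and> t a \<noteq> w \<longrightarrow> B' a = B a" "\<forall>i j. i < j \<and> j < n \<longrightarrow> B' a0 i j = 0"
    by blast
  have "\<forall>i j. i < j \<longrightarrow> B' a0 i j = 0"
  proof (intro allI impI)
    fix i j :: nat assume "i < j"
    show "B' a0 i j = 0"
    proof (cases "j < n")
      case True then show ?thesis using B'(5) \<open>i < j\<close> by blast
    next
      case False then show ?thesis using ut_zero[OF filt_ut[OF B'(1)]] by simp
    qed
  qed
  then show ?thesis using B' by blast
qed

lemma clear_tail:
  assumes inv: "U_invariant Q0 Q1 h t n f" and B: "B \<in> filtered_rep Q1 n"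
    and tw: "t a0 = w" and hw: "h a0 \<noteq> w" and nz: "\<forall>k<n. B a0 k k \<noteq> 0"
  shows "\<exists>B'. B' \<in> filtered_rep Q1 n \<and> Dg B' = Dg B \<and> f B' = f B \<and>
     (\<forall>a. h a \<noteq> w \<and> t a \<noteq> w \<longrightarrow> B' a = B a) \<and> (\<forall>i j. i < j \<longrightarrow> B' a0 i j = 0)"
proof -
  have "\<exists>B'. B' \<in> filtered_rep Q1 n \<and> Dg B' = Dg B \<and> f B' = f B \<and>
     (\<forall>a. h a \<noteq> w \<and> t a \<noteq> w \<longrightarrow> B' a = B a) \<and> (\<forall>i j. n - d \<le> i \<and> i < j \<longrightarrow> B' a0 i j = 0)" for d
  proof (induction d)
    case 0 then show ?case using B filt_ut[OF B, of a0] ut_zero by (intro exI[of _ B]) auto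
  next
    case (Suc d)
    then obtain B1 where B1: "B1 \<in> filtered_rep Q1 n" "Dg B1 = Dg B" "f B1 = f B"
      "\<forall>a. h a \<noteq> w \<and> t a \<noteq> w \<longrightarrow> B1 a = B a" "\<forall>i j. n - d \<le> i \<and> i < j \<longrightarrow> B1 a0 i j = 0"
      by blast
    show ?case
    proof (cases "d < n")
      case False
      then have "n - Suc d = n - d" by simp
      then show ?thesis using B1 by (intro exI[of _ B1]) auto
    next
      case True
      define m where "m = n - Suc d"
      have mn: "m < n" "n - d = Suc m" using True unfolding m_def by auto
      define M where "M = B1 a0"
      have Mut: "M \<in> ut n" unfolding M_def by (rule filt_ut[OF B1(1)])
      have "Dg B1 a0 m m = Dg B a0 m m" using B1(2) by simp
      then have Mmm: "M m m \<noteq> 0" using nz mn unfolding M_def Dg_def by simp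
      define N where "N = (\<lambda>i j. if i = m \<and> m < j \<and> j < n then - M m j / M m m else 0)"
      have nok: "nil_ok n N" unfolding nil_ok_def N_def by auto
      have nn: "(\<lambda>i j. - (- N i j)) = N" by simp
      have inv2: "mat_mult n (IpN n (\<lambda>i j. - N i j)) (IpN n N) = mat_id n"
        using IpN_inv[OF nil_ok_neg[OF nok]] by (simp only: nn)
      define B2 where "B2 = quiver_act n h t (\<lambda>i. if i = w then IpN n (\<lambda>i j. - N i j) else mat_id n)
          (\<lambda>i. if i = w then IpN n N else mat_id n) B1"
      note ov = one_vertex[OF inv B1(1) IpN_unip[OF nil_ok_neg[OF nok]] IpN_unip[OF nok] inv2 B2_def]
      have B2a0: "B2 a0 = mat_mult n M (IpN n N)" using ov(6)[OF tw hw] M_def by simp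
      have "B2 a0 i j = 0" if ij: "n - Suc d \<le> i" "i < j" for i j
      proof (cases "j < n")
        case jn: True
        have i_n: "i < n" using ij jn by auto
        have s: "(\<Sum>k<n. M i k * N k j) = (\<Sum>k<n. if k = m then M i m * N m j else 0)"
          by (rule sum.cong) (auto simp: N_def)
        have "B2 a0 i j = M i j + M i m * N m j"
          using jn i_n mn by (simp add: B2a0 IpN_right s sum_single)
        also have "\<dots> = 0"
        proof (cases "i = m")
          case True
          then show ?thesis using ij jn Mmm by (simp add: N_def)
        next
          case False
          then have "m < i" using ij m_def by simp
          then have "M i j = 0" "M i m = 0" using B1(5) ij mn ut_zero[OF Mut] unfolding M_def by auto
          then show ?thesis by simp
        qed
        finally show ?thesis .
      next
        case False
        then show ?thesis using ut_zero[OF filt_ut[OF ov(2)]] by simp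
      qed
      then show ?thesis using ov(1-4) B1 by (intro exI[of _ B2]) auto
    qed
  qed
  from this[of n] show ?thesis by simp
qed


lemma pair_wit: "(x::nat) < y \<Longrightarrow> y < r \<Longrightarrow> \<exists>a b. {x,y} = {a,b} \<and> a < b \<and> b < r"
  by blast

lemma edge_shape:
  assumes "dynkin_valid T" "e \<in> dynkin_edges T"
  shows "\<exists>x y. e = {x,y} \<and> x < y \<and> y < dynkin_rank T"
  using assms by (cases T) (auto intro!: pair_wit)

lemma edge_max_inj:
  assumes "dynkin_valid T" "e \<in> dynkin_edges T" "e' \<in> dynkin_edges T" "Max e = Max e'"
  shows "e = e'"
  using assms by (cases T) (auto simp: max_def split: if_splits)

lemma edges_finite:
  assumes "dynkin_valid T" shows "finite (dynkin_edges T)"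
proof -
  have "dynkin_edges T \<subseteq> Pow {..<dynkin_rank T}"
    using edge_shape[OF assms] by fastforce
  then show ?thesis by (rule finite_subset) auto
qed

lemma reduce:
  assumes inv: "U_invariant Q0 Q1 h t n f" and dq: "dynkin_quiver T Q0 Q1 h t"
    and A: "A \<in> filtered_rep Q1 n" and nz: "\<forall>a\<in>Q1. \<forall>k<n. A a k k \<noteq> 0"
  shows "f A = f (Dg A)"
proof -
  from dq obtain \<phi> where val: "dynkin_valid T" and hQ: "h ` Q1 \<subseteq> Q0" and tQ: "t ` Q1 \<subseteq> Q0"
    and phi: "bij_betw \<phi> Q0 {..<dynkin_rank T}"
    and edg: "bij_betw (\<lambda>a. {\<phi> (t a), \<phi> (h a)}) Q1 (dynkin_edges T)"
    unfolding dynkin_quiver_def by blast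
  define r where "r = dynkin_rank T"
  define ch where "ch a = max (\<phi> (t a)) (\<phi> (h a))" for a
  have eimg: "a \<in> Q1 \<Longrightarrow> {\<phi> (t a), \<phi> (h a)} \<in> dynkin_edges T" for a
    using edg by (auto simp: bij_betw_def)
  have dist: "\<phi> (t a) \<noteq> \<phi> (h a)" if a: "a \<in> Q1" for a
  proof -
    obtain x y where xy: "{\<phi> (t a), \<phi> (h a)} = {x,y}" "x < y"
      using edge_shape[OF val eimg[OF a]] by blast
    show ?thesis
    proof
      assume eq: "\<phi> (t a) = \<phi> (h a)"
      then have "{x, y} = {\<phi> (t a)}" using xy by simp
      then have "x = \<phi> (t a)" "y = \<phi> (t a)" by (auto simp: doubleton_eq_iff)
      then show False using xy by simp
    qed
  qed
  have chlt: "ch a < r" if a: "a \<in> Q1" for a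
  proof -
    have "t a \<in> Q0" "h a \<in> Q0" using a tQ hQ by auto
    then have "\<phi> (t a) < r" "\<phi> (h a) < r" using phi unfolding r_def by (auto simp: bij_betw_def)
    then show ?thesis unfolding ch_def by simp
  qed
  have chinj: "a = a'" if "a \<in> Q1" "a' \<in> Q1" "ch a = ch a'" for a a'
  proof -
    have "Max {\<phi> (t a), \<phi> (h a)} = Max {\<phi> (t a'), \<phi> (h a')}"
      using that(3) unfolding ch_def by simp
    then have "{\<phi> (t a), \<phi> (h a)} = {\<phi> (t a'), \<phi> (h a')}"
      by (rule edge_max_inj[OF val eimg[OF that(1)] eimg[OF that(2)]])
    then show ?thesis using edg that(1,2) unfolding bij_betw_def inj_on_def by blast
  qed
  have main: "\<exists>B. B \<in> filtered_rep Q1 n \<and> Dg B = Dg A \<and> f B = f A \<and>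
      (\<forall>a\<in>Q1. ch a < k \<longrightarrow> (\<forall>i j. i < j \<longrightarrow> B a i j = 0))" for k
  proof (induction k)
    case 0 then show ?case using A by blast
  next
    case (Suc k)
    then obtain B where B: "B \<in> filtered_rep Q1 n" "Dg B = Dg A" "f B = f A"
      "\<forall>a\<in>Q1. ch a < k \<longrightarrow> (\<forall>i j. i < j \<longrightarrow> B a i j = 0)" by blast
    have nzB: "\<forall>m<n. B a m m \<noteq> 0" if "a \<in> Q1" for a
    proof (intro allI impI)
      fix m assume "m < n"
      have "Dg B a m m = Dg A a m m" using B(2) by simp
      then show "B a m m \<noteq> 0" using nz that \<open>m < n\<close> by (simp add: Dg_def)
    qed
    show ?case
    proof (cases "\<exists>a0\<in>Q1. ch a0 = k")
      case False
      then show ?thesis using B less_Suc_eq by blast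
    next
      case True
      then obtain a0 where a0: "a0 \<in> Q1" "ch a0 = k" by blast
      have close: "\<exists>B. B \<in> filtered_rep Q1 n \<and> Dg B = Dg A \<and> f B = f A \<and>
      (\<forall>a\<in>Q1. ch a < Suc k \<longrightarrow> (\<forall>i j. i < j \<longrightarrow> B a i j = 0))" if w: "\<phi> w = k" and
        B': "B' \<in> filtered_rep Q1 n" "Dg B' = Dg B" "f B' = f B"
        "\<forall>a. h a \<noteq> w \<and> t a \<noteq> w \<longrightarrow> B' a = B a" "\<forall>i j. i < j \<longrightarrow> B' a0 i j = 0" for w B'
      proof -
        have "\<forall>a\<in>Q1. ch a < Suc k \<longrightarrow> (\<forall>i j. i < j \<longrightarrow> B' a i j = 0)"
        proof (intro ballI impI)
          fix a assume a: "a \<in> Q1" "ch a < Suc k"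
          show "\<forall>i j. i < j \<longrightarrow> B' a i j = 0"
          proof (cases "ch a = k")
            case True
            then have "a = a0" using chinj a0 a by simp
            then show ?thesis using B'(5) by simp
          next
            case False
            then have lt: "ch a < k" using a by simp
            then have "\<phi> (h a) \<noteq> k" "\<phi> (t a) \<noteq> k" unfolding ch_def by auto
            then have "h a \<noteq> w" "t a \<noteq> w" using w by auto
            then have "B' a = B a" using B'(4) by blast
            then show ?thesis using B(4) a lt by simp
          qed
        qed
        then show ?thesis using B' B by (intro exI[of _ B']) auto
      qed
      show ?thesis
      proof (cases "\<phi> (h a0) = k")
        case True
        have tw: "t a0 \<noteq> h a0" using dist[OF a0(1)] by auto
        obtain B' where "B' \<in> filtered_rep Q1 n \<and> Dg B' = Dg B \<and> f B' = f B \<and>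
          (\<forall>a. h a \<noteq> h a0 \<and> t a \<noteq> h a0 \<longrightarrow> B' a = B a) \<and> (\<forall>i j. i < j \<longrightarrow> B' a0 i j = 0)"
          using clear_head[OF inv B(1) refl tw nzB[OF a0(1)]] by blast
        then show ?thesis using close[OF True] by blast
      next
        case False
        then have tk: "\<phi> (t a0) = k" using a0(2) unfolding ch_def by (auto simp: max_def split: if_splits)
        have hw: "h a0 \<noteq> t a0" using dist[OF a0(1)] by auto
        obtain B' where "B' \<in> filtered_rep Q1 n \<and> Dg B' = Dg B \<and> f B' = f B \<and>
          (\<forall>a. h a \<noteq> t a0 \<and> t a \<noteq> t a0 \<longrightarrow> B' a = B a) \<and> (\<forall>i j. i < j \<longrightarrow> B' a0 i j = 0)"
          using clear_tail[OF inv B(1) refl hw nzB[OF a0(1)]] by blast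
        then show ?thesis using close[OF tk] by blast
      qed
    qed
  qed
  obtain B where B: "B \<in> filtered_rep Q1 n" "Dg B = Dg A" "f B = f A"
      "\<forall>a\<in>Q1. ch a < r \<longrightarrow> (\<forall>i j. i < j \<longrightarrow> B a i j = 0)"
    using main[of r] by blast
  have "B = Dg B"
  proof (intro ext)
    fix a i j
    show "B a i j = Dg B a i j"
    proof (cases "i = j")
      case True then show ?thesis by (simp add: Dg_def)
    next
      case False
      have "B a i j = 0"
      proof (cases "a \<in> Q1")
        case False then show ?thesis using filt_out[OF B(1)] by simp
      next
        case aQ: True
        show ?thesis
        proof (cases "i < j")
          case True then show ?thesis using B(4) chlt aQ by blast
        next
          case nlt: False
          then have "j < i" using \<open>i \<noteq> j\<close> by simp
          then show ?thesis using ut_zero[OF filt_ut[OF B(1)]] by simp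
        qed
      qed
      then show ?thesis using False by (simp add: Dg_def)
    qed
  qed
  then have "B = Dg A" using B(2) by simp
  then show ?thesis using B(3) by simp
qed

lemma dens_eq:
  fixes h1 h2 :: "complex \<Rightarrow> complex"
  assumes c1: "continuous_on UNIV h1" and c2: "continuous_on UNIV h2" and fin: "finite S"
    and eq: "\<And>s. s \<notin> S \<Longrightarrow> h1 s = h2 s"
  shows "h1 0 = h2 0"
proof -
  have ev: "eventually (\<lambda>s. s \<notin> S) (at 0)"
    using islimpt_finite[OF fin] islimpt_iff_eventually by blast
  then have ev2: "eventually (\<lambda>s. h2 s = h1 s) (at 0)"
    by (rule eventually_mono) (simp add: eq)
  have l1: "(h1 \<longlongrightarrow> h1 0) (at 0)" using c1 by (simp add: continuous_on_def)
  have l2: "(h2 \<longlongrightarrow> h2 0) (at 0)" using c2 by (simp add: continuous_on_def)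
  have l3: "(h1 \<longlongrightarrow> h2 0) (at 0)" by (rule Lim_transform_eventually[OF l2 ev2])
  show ?thesis using tendsto_unique[OF _ l1 l3] by simp
qed


theorem mainTheorem1:
  fixes T :: dynkin_type and Q0 :: "'v set" and Q1 :: "'e set"
    and h t :: "'e \<Rightarrow> 'v" and n :: nat
  assumes "n \<ge> 1"
    and "dynkin_quiver T Q0 Q1 h t"
  shows "\<forall>f \<in> poly_fun (upper_coords Q1 n).
           U_invariant Q0 Q1 h t n f \<longleftrightarrow>
           (\<exists>g \<in> poly_fun (diag_coords Q1 n). \<forall>A \<in> filtered_rep Q1 n. f A = g A)"
proof (intro ballI iffI)
  note dq = assms(2)
  from dq obtain \<phi> where val: "dynkin_valid T" and hQ: "h ` Q1 \<subseteq> Q0" and tQ: "t ` Q1 \<subseteq> Q0"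
    and edg: "bij_betw (\<lambda>a. {\<phi> (t a), \<phi> (h a)}) Q1 (dynkin_edges T)"
    unfolding dynkin_quiver_def by blast
  have finQ1: "finite Q1" using bij_betw_finite[OF edg] edges_finite[OF val] by simp
  fix f assume fP: "f \<in> poly_fun (upper_coords Q1 n)"
  {
    assume inv: "U_invariant Q0 Q1 h t n f"
    show "\<exists>g \<in> poly_fun (diag_coords Q1 n). \<forall>A \<in> filtered_rep Q1 n. f A = g A"
    proof (intro bexI[of _ "\<lambda>A. f (Dg A)"] ballI)
      show "(\<lambda>A. f (Dg A)) \<in> poly_fun (diag_coords Q1 n)" by (rule poly_Dg[OF fP])
      fix A assume A: "A \<in> filtered_rep Q1 n"
      define E :: "'e \<Rightarrow> cmat" where "E = (\<lambda>a i j. if a \<in> Q1 \<and> i = j \<and> i < n then 1 else 0)"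
      define P where "P s = (\<lambda>a i j. A a i j + s * E a i j)" for s :: complex
      define PD where "PD s = (\<lambda>a i j. Dg A a i j + s * E a i j)" for s :: complex
      define S where "S = (\<lambda>(a,k). - A a k k) ` (Q1 \<times> {..<n})"
      have finS: "finite S" unfolding S_def using finQ1 by simp
      have DP: "Dg (P s) = PD s" for s
        unfolding P_def PD_def Dg_def E_def by (intro ext) auto
      have eq: "f (P s) = f (PD s)" if s: "s \<notin> S" for s
      proof -
        have Pf: "P s \<in> filtered_rep Q1 n"
          using A unfolding filtered_rep_def P_def E_def by (auto split: if_splits)
        have Pnz: "\<forall>a\<in>Q1. \<forall>k<n. P s a k k \<noteq> 0"
        proof (intro ballI allI impI)
          fix a k assume "a \<in> Q1" "k < n"
          then have "s \<noteq> - A a k k" using s unfolding S_def by force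
          then show "P s a k k \<noteq> 0" using \<open>a \<in> Q1\<close> \<open>k < n\<close> unfolding P_def E_def
            by (auto simp: add_eq_0_iff)
        qed
        show ?thesis using reduce[OF inv dq Pf Pnz] DP by simp
      qed
      have "(\<lambda>s. f (P s)) 0 = (\<lambda>s. f (PD s)) 0"
        by (rule dens_eq[OF _ _ finS eq]) (unfold P_def PD_def, (rule poly_cont[OF fP])+)
      moreover have "P 0 = A" "PD 0 = Dg A" unfolding P_def PD_def by auto
      ultimately show "f A = f (Dg A)" by simp
    qed
  }
  {
    assume "\<exists>g \<in> poly_fun (diag_coords Q1 n). \<forall>A \<in> filtered_rep Q1 n. f A = g A"
    then obtain g where gP: "g \<in> poly_fun (diag_coords Q1 n)" and fg: "\<forall>A \<in> filtered_rep Q1 n. f A = g A"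
      by blast
    show "U_invariant Q0 Q1 h t n f"
      unfolding U_invariant_def
    proof (intro allI impI ballI)
      fix u v A
      assume uvc: "\<forall>i\<in>Q0. u i \<in> unipotent n \<and> v i \<in> unipotent n \<and> mat_mult n (u i) (v i) = mat_id n"
        and A: "A \<in> filtered_rep Q1 n"
      have uv: "\<forall>a\<in>Q1. u (h a) \<in> unipotent n \<and> v (t a) \<in> unipotent n"
        using uvc hQ tQ by blast
      note ap = act_props[OF A, where u = u and h = h and v = v and t = t, OF uv]
      have agree: "\<forall>(a,i,j)\<in>diag_coords Q1 n. quiver_act n h t u v A a i j = A a i j"
      proof (clarify)
        fix a i j assume "(a, i, j) \<in> diag_coords Q1 n"
        then have ij: "i = j" unfolding diag_coords_def by auto
        have "Dg (quiver_act n h t u v A) a i j = Dg A a i j" using ap(2) by simp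
        then show "quiver_act n h t u v A a i j = A a i j" using ij by (simp add: Dg_def)
      qed
      have "f (quiver_act n h t u v A) = g (quiver_act n h t u v A)" using fg ap(1) by blast
      also have "\<dots> = g A" by (rule poly_agree[OF gP agree])
      also have "\<dots> = f A" using fg A by simp
      finally show "f (quiver_act n h t u v A) = f A" .
    qed
  }
qed

end
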